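(* For any $n\in\mathbb{N}$, the monoids $\mathrm{rps}_n$ and $\mathrm{lps}_n$ have word problem solvable in quadratic time.
   Context: Let $\mathcal{A}_n=\{1<2<\cdots<n\}$. An lPS tableau is a finite (possibly empty) sequence of nonempty bottom-justified columns of boxes filled with positive integers, such that the entries of each column are strictly decreasing from top to bottom and the bottom entries of the columns form a weakly increasing sequence from left to right. An rPS tableau is defined in the same way but with columns weakly decreasing from top to bottom and the bottom row strictly increasing from left to right. Right insertion of a symbol $a$ into an lPS tableau $B$: if $a$ is greater than or equal to every entry of the bottom row, append a new column consisting of $a$ at the right end; otherwise, let $z$ be the leftmost bottom-row entry with $z>a$ and put $a$ in a new box at the bottom of the column of $z$ (the previous entries of that column move up one box). Right insertion into an rPS tableau is the same except that a new column is created iff $a$ is strictly greater than every bottom-row entry, and otherwise $z$ is the leftmost bottom-row entry with $z\geq a$. For $w=w_1\cdots w_k$, $\mathfrak{R}_\ell(w)$ (resp. $\mathfrak{R}_r(w)$) is obtained by starting with the empty lPS (resp. rPS) tableau and right-inserting $w_1,\dots,w_k$ in order. The monoid $\mathrm{lps}_n$ (resp. $\mathrm{rps}_n$) is the quotient of $\mathcal{A}_n^*$ by the congruence $u\equiv v\iff\mathfrak{R}_\ell(u)=\mathfrak{R}_\ell(v)$ (resp. $\mathfrak{R}_r(u)=\mathfrak{R}_r(v)$). The word problem (with respect to the generating set $\mathcal{A}_n$) asks, given $u,v\in\mathcal{A}_n^*$, whether they represent the same element; time is measured in $|u|+|v|$. *)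

theory Defs
  imports Main
begin

text \<open>A PS tableau is represented as the list of its columns from left to right;
  each column is a list of its entries read from the BOTTOM box upwards
  (so the head of each column is its bottom-row entry).\<close>

type_synonym tableau = "nat list list"

definition word_over :: "nat \<Rightarrow> nat list \<Rightarrow> bool" where
  "word_over n w \<longleftrightarrow> set w \<subseteq> {1..n}"

text \<open>Right insertion into an lPS tableau: put a at the bottom of the leftmost
  column whose bottom entry z satisfies z > a; otherwise create a new column at
  the right end. (The clause for an empty column never occurs for tableaux.)\<close>

fun ins_l :: "nat \<Rightarrow> tableau \<Rightarrow> tableau" where
  "ins_l a [] = [[a]]"
| "ins_l a ([] # cs) = [] # ins_l a cs"
| "ins_l a ((z # zs) # cs) = (if a < z then (a # z # zs) # cs else (z # zs) # ins_l a cs)"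

fun ins_r :: "nat \<Rightarrow> tableau \<Rightarrow> tableau" where
  "ins_r a [] = [[a]]"
| "ins_r a ([] # cs) = [] # ins_r a cs"
| "ins_r a ((z # zs) # cs) = (if a \<le> z then (a # z # zs) # cs else (z # zs) # ins_r a cs)"

fun ins_word_l :: "nat list \<Rightarrow> tableau \<Rightarrow> tableau" where
  "ins_word_l [] t = t"
| "ins_word_l (a # w) t = ins_word_l w (ins_l a t)"

fun ins_word_r :: "nat list \<Rightarrow> tableau \<Rightarrow> tableau" where
  "ins_word_r [] t = t"
| "ins_word_r (a # w) t = ins_word_r w (ins_r a t)"

definition R_l :: "nat list \<Rightarrow> tableau" where
  "R_l w = ins_word_l w []"

definition R_r :: "nat list \<Rightarrow> tableau" where
  "R_r w = ins_word_r w []"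

definition lps_eq :: "nat \<Rightarrow> nat list \<Rightarrow> nat list \<Rightarrow> bool" where
  "lps_eq n u v \<longleftrightarrow> word_over n u \<and> word_over n v \<and> R_l u = R_l v"

definition rps_eq :: "nat \<Rightarrow> nat list \<Rightarrow> nat list \<Rightarrow> bool" where
  "rps_eq n u v \<longleftrightarrow> word_over n u \<and> word_over n v \<and> R_r u = R_r v"

fun eq_col :: "nat list \<Rightarrow> nat list \<Rightarrow> bool" where
  "eq_col [] [] = True"
| "eq_col (x # xs) (y # ys) = (if x = y then eq_col xs ys else False)"
| "eq_col _ _ = False"

fun eq_tab :: "tableau \<Rightarrow> tableau \<Rightarrow> bool" where
  "eq_tab [] [] = True"
| "eq_tab (c # cs) (d # ds) = (if eq_col c d then eq_tab cs ds else False)"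
| "eq_tab _ _ = False"

fun decide_l :: "nat list \<Rightarrow> nat list \<Rightarrow> bool" where
  "decide_l u v = eq_tab (ins_word_l u []) (ins_word_l v [])"

fun decide_r :: "nat list \<Rightarrow> nat list \<Rightarrow> bool" where
  "decide_r u v = eq_tab (ins_word_r u []) (ins_word_r v [])"

text \<open>Running-time functions, written by hand following the convention of
  HOL-Library's time_fun command: every call of a defined function costs 1 plus
  the cost of the defined functions it calls; constructors and comparisons of
  letters are free (constant-cost primitives).\<close>

fun T_ins_l :: "nat \<Rightarrow> tableau \<Rightarrow> nat" where
  "T_ins_l a [] = 1"
| "T_ins_l a ([] # cs) = T_ins_l a cs + 1"
| "T_ins_l a ((z # zs) # cs) = (if a < z then 0 else T_ins_l a cs) + 1"

fun T_ins_r :: "nat \<Rightarrow> tableau \<Rightarrow> nat" where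
  "T_ins_r a [] = 1"
| "T_ins_r a ([] # cs) = T_ins_r a cs + 1"
| "T_ins_r a ((z # zs) # cs) = (if a \<le> z then 0 else T_ins_r a cs) + 1"

fun T_ins_word_l :: "nat list \<Rightarrow> tableau \<Rightarrow> nat" where
  "T_ins_word_l [] t = 1"
| "T_ins_word_l (a # w) t = T_ins_l a t + T_ins_word_l w (ins_l a t) + 1"

fun T_ins_word_r :: "nat list \<Rightarrow> tableau \<Rightarrow> nat" where
  "T_ins_word_r [] t = 1"
| "T_ins_word_r (a # w) t = T_ins_r a t + T_ins_word_r w (ins_r a t) + 1"

fun T_eq_col :: "nat list \<Rightarrow> nat list \<Rightarrow> nat" where
  "T_eq_col [] [] = 1"
| "T_eq_col (x # xs) (y # ys) = (if x = y then T_eq_col xs ys else 0) + 1"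
| "T_eq_col _ _ = 1"

fun T_eq_tab :: "tableau \<Rightarrow> tableau \<Rightarrow> nat" where
  "T_eq_tab [] [] = 1"
| "T_eq_tab (c # cs) (d # ds) =
     T_eq_col c d + (if eq_col c d then T_eq_tab cs ds else 0) + 1"
| "T_eq_tab _ _ = 1"

fun T_decide_l :: "nat list \<Rightarrow> nat list \<Rightarrow> nat" where
  "T_decide_l u v = T_ins_word_l u [] + T_ins_word_l v []
     + T_eq_tab (ins_word_l u []) (ins_word_l v []) + 1"

fun T_decide_r :: "nat list \<Rightarrow> nat list \<Rightarrow> nat" where
  "T_decide_r u v = T_ins_word_r u [] + T_ins_word_r v []
     + T_eq_tab (ins_word_r u []) (ins_word_r v []) + 1"

end

theory Submission
  imports Defs
begin

lemma eq_col_iff: "eq_col c d \<longleftrightarrow> c = d"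
  by (induction c d rule: eq_col.induct) auto

lemma eq_tab_iff: "eq_tab t s \<longleftrightarrow> t = s"
  by (induction t s rule: eq_tab.induct) (auto simp: eq_col_iff)

lemma T_eq_col_le: "T_eq_col c d \<le> length c + 1"
  by (induction c d rule: T_eq_col.induct) auto

lemma T_eq_tab_le: "T_eq_tab t s \<le> sum_list (map length t) + 2 * length t + 1"
proof (induction t s rule: T_eq_tab.induct)
  case (2 c cs d ds)
  then show ?case using T_eq_col_le[of c d] by auto
qed auto

lemma T_ins_l_le: "T_ins_l a t \<le> length t + 1"
  by (induction a t rule: T_ins_l.induct) auto
lemma T_ins_r_le: "T_ins_r a t \<le> length t + 1"
  by (induction a t rule: T_ins_r.induct) auto
lemma len_ins_l: "length (ins_l a t) \<le> length t + 1"
  by (induction a t rule: ins_l.induct) auto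
lemma len_ins_r: "length (ins_r a t) \<le> length t + 1"
  by (induction a t rule: ins_r.induct) auto
lemma sz_ins_l: "sum_list (map length (ins_l a t)) = sum_list (map length t) + 1"
  by (induction a t rule: ins_l.induct) auto
lemma sz_ins_r: "sum_list (map length (ins_r a t)) = sum_list (map length t) + 1"
  by (induction a t rule: ins_r.induct) auto

lemma len_word_l: "length (ins_word_l w t) \<le> length t + length w"
proof (induction w arbitrary: t)
  case (Cons a w)
  have "length (ins_word_l w (ins_l a t)) \<le> length (ins_l a t) + length w" by (rule Cons.IH)
  then show ?case using len_ins_l[of a t] by simp
qed simp
lemma len_word_r: "length (ins_word_r w t) \<le> length t + length w"
proof (induction w arbitrary: t)
  case (Cons a w)
  have "length (ins_word_r w (ins_r a t)) \<le> length (ins_r a t) + length w" by (rule Cons.IH)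
  then show ?case using len_ins_r[of a t] by simp
qed simp
lemma sz_word_l: "sum_list (map length (ins_word_l w t)) = sum_list (map length t) + length w"
  by (induction w arbitrary: t) (auto simp: sz_ins_l)
lemma sz_word_r: "sum_list (map length (ins_word_r w t)) = sum_list (map length t) + length w"
  by (induction w arbitrary: t) (auto simp: sz_ins_r)

lemma T_word_l: "T_ins_word_l w t \<le> length w * (length t + length w + 2) + 1"
proof (induction w arbitrary: t)
  case (Cons a w)
  have "T_ins_word_l w (ins_l a t) \<le> length w * (length (ins_l a t) + length w + 2) + 1"
    using Cons by blast
  also have "\<dots> \<le> length w * (length t + length w + 3) + 1"
    using mult_le_mono2[of "length (ins_l a t) + length w + 2" "length t + length w + 3" "length w"] len_ins_l[of a t] by simp
  finally show ?case using T_ins_l_le[of a t] by (simp add: algebra_simps)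
qed simp

lemma T_word_r: "T_ins_word_r w t \<le> length w * (length t + length w + 2) + 1"
proof (induction w arbitrary: t)
  case (Cons a w)
  have "T_ins_word_r w (ins_r a t) \<le> length w * (length (ins_r a t) + length w + 2) + 1"
    using Cons by blast
  also have "\<dots> \<le> length w * (length t + length w + 3) + 1"
    using mult_le_mono2[of "length (ins_r a t) + length w + 2" "length t + length w + 3" "length w"] len_ins_r[of a t] by simp
  finally show ?case using T_ins_r_le[of a t] by (simp add: algebra_simps)
qed simp

lemma lin_aux: "(x::nat) \<le> X \<Longrightarrow> y \<le> Y \<Longrightarrow> A \<le> X + 2*x + 1 \<Longrightarrow> B \<le> Y + 2*y + 1
  \<Longrightarrow> C \<le> x + 2*x + 1 \<Longrightarrow> X + Y \<le> Z \<Longrightarrow> A + B + C + 1 \<le> 10 * Z + 10"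
  by linarith

lemma arith_bound:
  fixes x y :: nat
  assumes "A \<le> x * (x + 2) + 1" "B \<le> y * (y + 2) + 1" "C \<le> x + 2 * x + 1"
  shows "A + B + C + 1 \<le> 10 * (x + y)^2 + 10"
proof (rule lin_aux[of x "x*x" y "y*y"])
  show "x*x + y*y \<le> (x+y)^2" by (simp add: power2_eq_square algebra_simps)
  show "x \<le> x*x" "y \<le> y*y" by (simp_all add: le_square)
  show "A \<le> x*x + 2*x + 1" using assms(1) by (simp add: algebra_simps)
  show "B \<le> y*y + 2*y + 1" using assms(2) by (simp add: algebra_simps)
  show "C \<le> x + 2*x + 1" by (rule assms(3))
qed

lemma aux1: "(T::nat) \<le> S + 2*L + 1 \<Longrightarrow> S = u \<Longrightarrow> L \<le> u \<Longrightarrow> T \<le> u + 2*u + 1"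
  by presburger

theorem proposition6p8:
  fixes n :: nat
  shows "\<exists>c::nat. \<forall>u v. word_over n u \<longrightarrow> word_over n v \<longrightarrow>
            (decide_r u v \<longleftrightarrow> rps_eq n u v) \<and>
            T_decide_r u v \<le> c * (length u + length v)^2 + c \<and>
            (decide_l u v \<longleftrightarrow> lps_eq n u v) \<and>
            T_decide_l u v \<le> c * (length u + length v)^2 + c"
proof (intro exI allI impI conjI)
  fix u v assume u: "word_over n u" and v: "word_over n v"
  show "decide_r u v \<longleftrightarrow> rps_eq n u v" using u v by (simp add: eq_tab_iff rps_eq_def R_r_def)
  show "decide_l u v \<longleftrightarrow> lps_eq n u v" using u v by (simp add: eq_tab_iff lps_eq_def R_l_def)
  have c1: "T_eq_tab (ins_word_r u []) (ins_word_r v []) \<le> length u + 2 * length u + 1"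
  proof -
    have s1: "sum_list (map length (ins_word_r u [])) = length u" using sz_word_r[of u "[]"] by simp
    have s2: "length (ins_word_r u []) \<le> length u" using len_word_r[of u "[]"] by simp
    show ?thesis by (rule aux1[OF T_eq_tab_le s1 s2])
  qed
  show "T_decide_r u v \<le> 10 * (length u + length v)^2 + 10"
  proof -
    have a: "T_ins_word_r u [] \<le> length u * (length u + 2) + 1" using T_word_r[of u "[]"] by simp
    have b: "T_ins_word_r v [] \<le> length v * (length v + 2) + 1" using T_word_r[of v "[]"] by simp
    show ?thesis unfolding T_decide_r.simps by (rule arith_bound[OF a b c1])
  qed
  have c2: "T_eq_tab (ins_word_l u []) (ins_word_l v []) \<le> length u + 2 * length u + 1"
  proof -
    have s1: "sum_list (map length (ins_word_l u [])) = length u" using sz_word_l[of u "[]"] by simp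
    have s2: "length (ins_word_l u []) \<le> length u" using len_word_l[of u "[]"] by simp
    show ?thesis by (rule aux1[OF T_eq_tab_le s1 s2])
  qed
  show "T_decide_l u v \<le> 10 * (length u + length v)^2 + 10"
  proof -
    have a: "T_ins_word_l u [] \<le> length u * (length u + 2) + 1" using T_word_l[of u "[]"] by simp
    have b: "T_ins_word_l v [] \<le> length v * (length v + 2) + 1" using T_word_l[of v "[]"] by simp
    show ?thesis unfolding T_decide_l.simps by (rule arith_bound[OF a b c2])
  qed
qed

end
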